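(* There exists a finite outerplanar graph $G$ such that the vertices of $G$ cannot be non-repetitively coloured using fewer than five colours; that is, every non-repetitive vertex colouring of $G$ uses at least five colours.
   Context: A finite sequence $a_1a_2\cdots a_n$ is called non-repetitive if it contains no two identical adjacent blocks, i.e. there are no $i$ and $m\ge 1$ with $i+2m-1\le n$ and $a_{i+j}=a_{i+m+j}$ for all $0\le j<m$. A vertex colouring of a graph $G$ is called non-repetitive if for every path $v_1v_2\cdots v_n$ in $G$ with distinct vertices, the sequence of colours of $v_1,\dots,v_n$ is non-repetitive. A graph is outerplanar if it has a planar embedding in which all vertices lie on the boundary of the outer face. *)

theory Defs
  imports "HOL-Analysis.Analysis"
begin

definition simple_graph :: "nat set \<Rightarrow> (nat \<Rightarrow> nat \<Rightarrow> bool) \<Rightarrow> bool" where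
  "simple_graph V E \<longleftrightarrow>
     (\<forall>u v. E u v \<longrightarrow> u \<in> V \<and> v \<in> V \<and> u \<noteq> v \<and> E v u)"

definition nonrep_seq :: "'b list \<Rightarrow> bool" where
  "nonrep_seq xs \<longleftrightarrow>
     \<not> (\<exists>i m. 1 \<le> m \<and> i + 2 * m \<le> length xs \<and>
              (\<forall>j<m. xs ! (i + j) = xs ! (i + m + j)))"

definition graph_path :: "nat set \<Rightarrow> (nat \<Rightarrow> nat \<Rightarrow> bool) \<Rightarrow> nat list \<Rightarrow> bool" where
  "graph_path V E ps \<longleftrightarrow>
     distinct ps \<and> set ps \<subseteq> V \<and> (\<forall>i. i + 1 < length ps \<longrightarrow> E (ps ! i) (ps ! (i + 1)))"

definition nonrep_colouring ::
    "nat set \<Rightarrow> (nat \<Rightarrow> nat \<Rightarrow> bool) \<Rightarrow> (nat \<Rightarrow> 'b) \<Rightarrow> bool" where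
  "nonrep_colouring V E c \<longleftrightarrow> (\<forall>ps. graph_path V E ps \<longrightarrow> nonrep_seq (map c ps))"

text \<open>The drawing is outerplanar if all vertex points lie on the
boundary of the outer (unbounded) face, i.e. the unbounded connected component of
the complement of the drawing.\<close>

definition outerplanar_embedding ::
    "nat set \<Rightarrow> (nat \<Rightarrow> nat \<Rightarrow> bool) \<Rightarrow> (nat \<Rightarrow> complex) \<Rightarrow> (nat set \<Rightarrow> real \<Rightarrow> complex) \<Rightarrow> bool"
  where
  "outerplanar_embedding V E pos \<gamma> \<longleftrightarrow>
     inj_on pos V \<and>
     (\<forall>u v. E u v \<longrightarrow>
        arc (\<gamma> {u, v}) \<and>
        {pathstart (\<gamma> {u, v}), pathfinish (\<gamma> {u, v})} = {pos u, pos v} \<and>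
        path_image (\<gamma> {u, v}) \<inter> pos ` V = {pos u, pos v}) \<and>
     (\<forall>u v u' v'. E u v \<longrightarrow> E u' v' \<longrightarrow> {u, v} \<noteq> {u', v'} \<longrightarrow>
        path_image (\<gamma> {u, v}) \<inter> path_image (\<gamma> {u', v'}) \<subseteq> pos ` ({u, v} \<inter> {u', v'})) \<and>
     (let D = pos ` V \<union> \<Union> {path_image (\<gamma> {u, v}) | u v. E u v} in
        \<exists>F \<in> components (- D). \<not> bounded F \<and> pos ` V \<subseteq> frontier F)"

definition outerplanar :: "nat set \<Rightarrow> (nat \<Rightarrow> nat \<Rightarrow> bool) \<Rightarrow> bool" where
  "outerplanar V E \<longleftrightarrow> (\<exists>pos \<gamma>. outerplanar_embedding V E pos \<gamma>)"

end

theory Submission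
  imports Defs
begin


definition pos :: "nat \<Rightarrow> complex" where "pos k = Complex (real k) (real k ^ 2)"

lemma pos_inj: "pos a = pos b \<longleftrightarrow> a = b"
  by (auto simp: pos_def complex_eq_iff)

lemma seg_char:
  assumes "z \<in> closed_segment (pos a) (pos b)" "a \<le> b"
  shows "real a \<le> Re z \<and> Re z \<le> real b \<and> Im z = (real a + real b) * Re z - real a * real b"
proof -
  obtain u where u: "0 \<le> u" "u \<le> 1" "z = (1 - u) *\<^sub>R pos a + u *\<^sub>R pos b"
    using assms(1) by (auto simp: closed_segment_def)
  have re: "Re z = (1-u) * a + u * b" and im: "Im z = (1-u) * a^2 + u * b^2"
    using u(3) by (auto simp: pos_def)
  have "real a \<le> b" using assms(2) by simp
  hence "(1-u) * a + u * a \<le> (1-u) * a + u * b" using u by (simp add: mult_left_mono)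
  moreover have "(1-u) * a + u * b \<le> (1-u) * b + u * b" using u \<open>real a \<le> b\<close> by (simp add: mult_left_mono)
  moreover have "(1-u) * a^2 + u * b^2 = (real a + real b) * ((1-u) * a + u * b) - real a * real b"
    by (simp add: algebra_simps power2_eq_square)
  ultimately show ?thesis unfolding re im by (simp add: algebra_simps)
qed

lemma seg_above:
  assumes "z \<in> closed_segment (pos a) (pos b)" "a \<le> b"
  shows "(Re z)^2 \<le> Im z"
proof -
  have h: "real a \<le> Re z" "Re z \<le> real b" "Im z = (real a + real b) * Re z - real a * real b"
    using seg_char[OF assms] by auto
  have "0 \<le> (Re z - a) * (b - Re z)" using h by simp
  thus ?thesis using h by (simp add: algebra_simps power2_eq_square)
qed

lemma vertex_on_seg:
  assumes "pos k \<in> closed_segment (pos a) (pos b)" "a \<le> b"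
  shows "k = a \<or> k = b"
proof -
  have h: "real a \<le> k" "k \<le> real b" "real k ^2 = (real a + real b) * k - real a * real b"
    using seg_char[OF assms] by (auto simp: pos_def)
  hence "(real k - a) * (real k - b) = 0" by (simp add: algebra_simps power2_eq_square)
  thus ?thesis by auto
qed

lemma cross_real:
  fixes a b c d x :: real
  assumes "a < b" "c < d" "a \<le> x" "x \<le> b" "c \<le> x" "x \<le> d"
    "(a + b) * x - a * b = (c + d) * x - c * d"
    "\<not> (a < c \<and> c < b \<and> b < d)" "\<not> (c < a \<and> a < d \<and> d < b)" "\<not> (a = c \<and> b = d)"
  shows "(x = a \<or> x = b) \<and> (x = c \<or> x = d)"
proof -
  have f: "(x - c) * (x - d) = (x - a) * (x - b)" using assms(7) by (simp add: algebra_simps)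
  consider "b \<le> c" | "d \<le> a" | "a \<le> c \<and> d \<le> b" | "c \<le> a \<and> b \<le> d" using assms(8,9) by linarith
  thus ?thesis
  proof cases
    case 1 thus ?thesis using assms by auto
  next
    case 2 thus ?thesis using assms by auto
  next
    case 3
    have A: "(x - c) * (x - d) \<le> 0" using assms by (simp add: mult_nonneg_nonpos)
    have B: "(x - a) * (x - b) \<le> 0" using assms by (simp add: mult_nonneg_nonpos)
    have id: "(d - c) * ((a+b-c-d)*x + c*d - a*b) = (d - x) * ((c - a) * (b - c)) + (x - c) * ((d - a) * (b - d))"
      by (simp add: algebra_simps)
    have g0: "(a+b-c-d)*x + c*d - a*b = 0" using assms(7) by (simp add: algebra_simps)
    have t1: "(d - x) * ((c - a) * (b - c)) \<ge> 0" using 3 assms by simp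
    have t2: "(x - c) * ((d - a) * (b - d)) \<ge> 0" using 3 assms by simp
    have s: "(d - x) * ((c - a) * (b - c)) + (x - c) * ((d - a) * (b - d)) = 0" using id g0 by simp
    have z1: "(d - x) * ((c - a) * (b - c)) = 0" using s t1 t2 by linarith
    have z2: "(x - c) * ((d - a) * (b - d)) = 0" using s t1 t2 by linarith
    have "x < d \<Longrightarrow> c = a" using z1 3 assms by auto
    moreover have "c < x \<Longrightarrow> d = b" using z2 3 assms by auto
    ultimately show ?thesis using assms by force
  next
    case 4
    have id: "(b - a) * ((c+d-a-b)*x + a*b - c*d) = (b - x) * ((a - c) * (d - a)) + (x - a) * ((b - c) * (d - b))"
      by (simp add: algebra_simps)
    have g0: "(c+d-a-b)*x + a*b - c*d = 0" using assms(7) by (simp add: algebra_simps)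
    have t1: "(b - x) * ((a - c) * (d - a)) \<ge> 0" using 4 assms by simp
    have t2: "(x - a) * ((b - c) * (d - b)) \<ge> 0" using 4 assms by simp
    have s: "(b - x) * ((a - c) * (d - a)) + (x - a) * ((b - c) * (d - b)) = 0" using id g0 by simp
    have z1: "(b - x) * ((a - c) * (d - a)) = 0" using s t1 t2 by linarith
    have z2: "(x - a) * ((b - c) * (d - b)) = 0" using s t1 t2 by linarith
    have "x < b \<Longrightarrow> c = a" using z1 4 assms by auto
    moreover have "a < x \<Longrightarrow> d = b" using z2 4 assms by auto
    ultimately show ?thesis using assms by force
  qed
qed

lemma cross_seg:
  fixes a b c d :: nat
  assumes "a < b" "c < d" "\<not> (a < c \<and> c < b \<and> b < d)" "\<not> (c < a \<and> a < d \<and> d < b)"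
    "\<not> (a = c \<and> b = d)"
  shows "closed_segment (pos a) (pos b) \<inter> closed_segment (pos c) (pos d) \<subseteq> pos ` ({a,b} \<inter> {c,d})"
proof
  fix z assume z: "z \<in> closed_segment (pos a) (pos b) \<inter> closed_segment (pos c) (pos d)"
  have h1: "real a \<le> Re z \<and> Re z \<le> real b \<and> Im z = (real a + real b) * Re z - real a * real b"
    using seg_char[of z a b] z assms by auto
  have h2: "real c \<le> Re z \<and> Re z \<le> real d \<and> Im z = (real c + real d) * Re z - real c * real d"
    using seg_char[of z c d] z assms by auto
  have cr: "(Re z = a \<or> Re z = b) \<and> (Re z = c \<or> Re z = d)"
    apply (rule cross_real[of "real a" "real b" "real c" "real d"])
    using assms h1 h2 by auto
  then obtain k where k: "k \<in> {a,b} \<inter> {c,d}" "Re z = real k" by auto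
  have "Im z = real k ^ 2" using h1 k by (auto simp: algebra_simps power2_eq_square)
  hence "z = pos k" using k by (simp add: pos_def complex_eq_iff)
  thus "z \<in> pos ` ({a,b} \<inter> {c,d})" using k by blast
qed

lemma outer_face:
  fixes D :: "complex set" and V :: "nat set"
  assumes DP: "\<And>z. z \<in> D \<Longrightarrow> (Re z)^2 \<le> Im z" and VD: "pos ` V \<subseteq> D"
  shows "\<exists>F \<in> components (- D). \<not> bounded F \<and> pos ` V \<subseteq> frontier F"
proof -
  define z0 where "z0 = Complex 0 (-1)"
  define H where "H = {z::complex. Im z < 0}"
  define F where "F = connected_component_set (- D) z0"
  have HD: "H \<subseteq> - D"
  proof
    fix z assume "z \<in> H"
    hence "Im z < (Re z)^2" unfolding H_def by (smt (verit) mem_Collect_eq zero_le_power2)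
    thus "z \<in> - D" using DP by force
  qed
  have z0H: "z0 \<in> H" by (simp add: z0_def H_def)
  have cH: "connected H" unfolding H_def by (intro convex_connected convex_halfspace_Im_lt)
  have HF: "H \<subseteq> F" unfolding F_def by (rule connected_component_maximal[OF z0H cH HD])
  have Fc: "F \<in> components (- D)" unfolding F_def using z0H HD by (intro componentsI) auto
  have Fsub: "F \<subseteq> - D" using Fc in_components_subset by blast
  have ub: "\<not> bounded F"
  proof
    assume "bounded F"
    hence "bounded H" using HF bounded_subset by blast
    then obtain B where B: "\<And>z. z \<in> H \<Longrightarrow> norm z \<le> B" by (auto simp: bounded_iff)
    have "Complex 0 (- (\<bar>B\<bar> + 1)) \<in> H" by (simp add: H_def)
    from B[OF this] show False by (simp add: norm_complex_def)
  qed
  have fr: "pos k \<in> frontier F" if kV: "k \<in> V" for k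
  proof -
    define L where "L = {z::complex. Re z = real k \<and> Im z < real k ^ 2}"
    have Leq: "L = {z. Re z \<ge> real k} \<inter> {z. Re z \<le> real k} \<inter> {z. Im z < real k ^ 2}"
      unfolding L_def by auto
    have cL: "connected L" unfolding Leq
      by (intro convex_connected convex_Int convex_halfspace_Im_lt convex_halfspace_Re_ge convex_halfspace_Re_le)
    have LD: "L \<subseteq> - D"
    proof
      fix z assume "z \<in> L"
      hence "Im z < (Re z)^2" unfolding L_def by auto
      thus "z \<in> - D" using DP by force
    qed
    have HL: "H \<inter> L \<noteq> {}"
    proof -
      have "Complex (real k) (-1) \<in> H \<inter> L" unfolding H_def L_def
        by (simp add: power2_eq_square) (smt (verit) zero_le_mult_iff)
      thus ?thesis by blast
    qed
    have "H \<union> L \<subseteq> F" unfolding F_def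
      by (rule connected_component_maximal) (use z0H cH cL HL HD LD in \<open>auto intro: connected_Un\<close>)
    hence LF: "L \<subseteq> F" by blast
    have "pos k \<in> closure L"
    proof (subst closure_approachable, intro allI impI)
      fix e :: real assume e: "e > 0"
      have "Complex (real k) (real k ^ 2 - e/2) \<in> L" using e by (simp add: L_def)
      moreover have "dist (Complex (real k) (real k ^ 2 - e/2)) (pos k) < e"
        using e by (simp add: pos_def dist_norm norm_complex_def)
      ultimately show "\<exists>y\<in>L. dist y (pos k) < e" by blast
    qed
    hence "pos k \<in> closure F" using LF closure_mono by blast
    moreover have "pos k \<notin> interior F"
      using interior_subset Fsub VD kV by blast
    ultimately show ?thesis by (simp add: frontier_def)
  qed
  show ?thesis using Fc ub fr by blast
qed



definition ES :: "(nat \<times> nat) set" where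
  "ES = {(0,1),(0,2),(0,6),(1,2),(2,3),(2,6),(3,4),(3,5),(3,6),(4,5),(5,6)}"
definition EE :: "nat \<Rightarrow> nat \<Rightarrow> bool" where "EE u v \<longleftrightarrow> (u,v) \<in> ES \<or> (v,u) \<in> ES"
definition VV :: "nat set" where "VV = {0..6}"
definition gam :: "nat set \<Rightarrow> real \<Rightarrow> complex" where
  "gam S = linepath (pos (Min S)) (pos (Max S))"

lemma ES_props: "(a,b) \<in> ES \<Longrightarrow> a < b \<and> b \<le> 6" by (auto simp: ES_def)
lemma ES_nonint: "(a,b) \<in> ES \<Longrightarrow> (c,d) \<in> ES \<Longrightarrow> \<not> (a < c \<and> c < b \<and> b < d)"
  by (auto simp: ES_def)
lemma EE_cases: "EE u v \<Longrightarrow> \<exists>a b. (a,b) \<in> ES \<and> {u,v} = {a,b}"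
  by (auto simp: EE_def)
lemma gam_ES: "(a,b) \<in> ES \<Longrightarrow> gam {a,b} = linepath (pos a) (pos b)"
  using ES_props[of a b] by (simp add: gam_def min_def max_def)

lemma simple: "simple_graph VV EE"
  unfolding simple_graph_def EE_def VV_def ES_def by auto

lemma outerplanar_G: "outerplanar VV EE"
  unfolding outerplanar_def
proof (intro exI)
  show "outerplanar_embedding VV EE pos gam"
    unfolding outerplanar_embedding_def Let_def
  proof (intro conjI allI impI)
    show "inj_on pos VV" by (simp add: inj_on_def pos_inj)
  next
    fix u v assume "EE u v"
    then obtain a b where ab: "(a,b) \<in> ES" "{u,v} = {a,b}" using EE_cases by blast
    note p = ES_props[OF ab(1)]
    have g: "gam {u,v} = linepath (pos a) (pos b)" using gam_ES ab by simp
    show "arc (gam {u, v})" unfolding g by (rule arc_linepath) (use p pos_inj in auto)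
    show "{pathstart (gam {u, v}), pathfinish (gam {u, v})} = {pos u, pos v}"
      unfolding g using ab by auto
    show "path_image (gam {u, v}) \<inter> pos ` VV = {pos u, pos v}"
    proof
      show "path_image (gam {u, v}) \<inter> pos ` VV \<subseteq> {pos u, pos v}"
        unfolding g using vertex_on_seg[of _ a b] p ab(2) by (auto simp: doubleton_eq_iff)
      have "{a,b} \<subseteq> VV" using p by (auto simp: VV_def)
      thus "{pos u, pos v} \<subseteq> path_image (gam {u, v}) \<inter> pos ` VV"
        unfolding g using ab(2) by (auto simp: doubleton_eq_iff)
    qed
  next
    fix u v u' v' assume e1: "EE u v" and e2: "EE u' v'" and ne: "{u, v} \<noteq> {u', v'}"
    obtain a b where ab: "(a,b) \<in> ES" "{u,v} = {a,b}" using EE_cases e1 by blast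
    obtain c d where cd: "(c,d) \<in> ES" "{u',v'} = {c,d}" using EE_cases e2 by blast
    have "closed_segment (pos a) (pos b) \<inter> closed_segment (pos c) (pos d) \<subseteq> pos ` ({a,b} \<inter> {c,d})"
      apply (rule cross_seg)
      using ES_props[OF ab(1)] ES_props[OF cd(1)] ES_nonint[OF ab(1) cd(1)] ES_nonint[OF cd(1) ab(1)] ne ab(2) cd(2)
      by auto
    thus "path_image (gam {u, v}) \<inter> path_image (gam {u', v'}) \<subseteq> pos ` ({u, v} \<inter> {u', v'})"
      using gam_ES[OF ab(1)] gam_ES[OF cd(1)] ab(2) cd(2) by simp
  next
    show "\<exists>F\<in>components (- (pos ` VV \<union> \<Union> {path_image (gam {u, v}) |u v. EE u v})).
       \<not> bounded F \<and> pos ` VV \<subseteq> frontier F"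
    proof (rule outer_face)
      fix z assume "z \<in> pos ` VV \<union> \<Union> {path_image (gam {u, v}) |u v. EE u v}"
      then consider "z \<in> pos ` VV" | u v where "EE u v" "z \<in> path_image (gam {u, v})" by blast
      thus "(Re z)^2 \<le> Im z"
      proof cases
        case 1 thus ?thesis by (auto simp: pos_def)
      next
        case 2
        obtain a b where ab: "(a,b) \<in> ES" "{u,v} = {a,b}" using EE_cases 2(1) by blast
        show ?thesis using seg_above[of z a b] 2(2) gam_ES[OF ab(1)] ab(2) ES_props[OF ab(1)] by simp
      qed
    qed auto
  qed
qed



lemma sq:
  assumes "nonrep_colouring V E c" "graph_path V E (xs @ ys)" "length xs = length ys" "xs \<noteq> []"
  shows "map c xs \<noteq> map c ys"
proof
  assume eq: "map c xs = map c ys"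
  have "nonrep_seq (map c (xs @ ys))" using assms(1,2) unfolding nonrep_colouring_def by blast
  moreover have "\<forall>j<length xs. map c (xs @ ys) ! (0 + j) = map c (xs @ ys) ! (0 + length xs + j)"
  proof (intro allI impI)
    fix j assume "j < length xs"
    thus "map c (xs @ ys) ! (0 + j) = map c (xs @ ys) ! (0 + length xs + j)"
      using eq assms(3) by (simp add: nth_append)
  qed
  moreover have "1 \<le> length xs" "0 + 2 * length xs \<le> length (map c (xs @ ys))"
    using assms(3,4) by (auto simp: Suc_le_eq)
  ultimately show False unfolding nonrep_seq_def by blast
qed

lemma edge_ne:
  assumes "nonrep_colouring VV EE c" "EE a b" shows "c a \<noteq> c b"
proof -
  have "graph_path VV EE ([a] @ [b])"
    using assms(2) simple unfolding graph_path_def simple_graph_def by auto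
  from sq[OF assms(1) this] show ?thesis by simp
qed

lemma path_ne:
  assumes "nonrep_colouring VV EE c" "EE a b" "EE b d" "EE d e" "distinct [a,b,d,e]"
  shows "\<not> (c a = c d \<and> c b = c e)"
proof -
  have V: "a \<in> VV" "b \<in> VV" "d \<in> VV" "e \<in> VV"
    using assms(2-4) simple unfolding simple_graph_def by blast+
  have "graph_path VV EE ([a,b] @ [d,e])"
    unfolding graph_path_def
  proof (intro conjI allI impI)
    fix i assume "i + 1 < length ([a, b] @ [d, e])"
    hence "i = 0 \<or> i = 1 \<or> i = 2" by auto
    thus "EE (([a, b] @ [d, e]) ! i) (([a, b] @ [d, e]) ! (i + 1))" using assms by auto
  qed (use assms V in auto)
  from sq[OF assms(1) this] show ?thesis by simp
qed

lemma comb: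
  assumes nr: "nonrep_colouring VV EE c" and lt: "card (c ` VV) < 5"
  shows False
proof -
  have fin: "finite (c ` VV)" by (simp add: VV_def)
  have c0: "c 0 \<noteq> c 1" by (rule edge_ne[OF nr]) (simp add: EE_def ES_def)
  have c1: "c 0 \<noteq> c 2" by (rule edge_ne[OF nr]) (simp add: EE_def ES_def)
  have c2: "c 0 \<noteq> c 6" by (rule edge_ne[OF nr]) (simp add: EE_def ES_def)
  have c3: "c 1 \<noteq> c 2" by (rule edge_ne[OF nr]) (simp add: EE_def ES_def)
  have c4: "c 2 \<noteq> c 3" by (rule edge_ne[OF nr]) (simp add: EE_def ES_def)
  have c5: "c 2 \<noteq> c 6" by (rule edge_ne[OF nr]) (simp add: EE_def ES_def)
  have c6: "c 3 \<noteq> c 4" by (rule edge_ne[OF nr]) (simp add: EE_def ES_def)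
  have c7: "c 3 \<noteq> c 5" by (rule edge_ne[OF nr]) (simp add: EE_def ES_def)
  have c8: "c 3 \<noteq> c 6" by (rule edge_ne[OF nr]) (simp add: EE_def ES_def)
  have c9: "c 4 \<noteq> c 5" by (rule edge_ne[OF nr]) (simp add: EE_def ES_def)
  have c10: "c 5 \<noteq> c 6" by (rule edge_ne[OF nr]) (simp add: EE_def ES_def)
  have c11: "\<not> (c 0 = c 3 \<and> c 2 = c 5)" by (rule path_ne[OF nr]) (auto simp: EE_def ES_def)
  have c12: "\<not> (c 1 = c 3 \<and> c 2 = c 4)" by (rule path_ne[OF nr]) (auto simp: EE_def ES_def)
  have c13: "\<not> (c 0 = c 3 \<and> c 2 = c 4)" by (rule path_ne[OF nr]) (auto simp: EE_def ES_def)
  have c14: "\<not> (c 1 = c 6 \<and> c 2 = c 5)" by (rule path_ne[OF nr]) (auto simp: EE_def ES_def)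
  have c15: "\<not> (c 1 = c 3 \<and> c 2 = c 5)" by (rule path_ne[OF nr]) (auto simp: EE_def ES_def)
  have c16: "\<not> (c 0 = c 3 \<and> c 6 = c 4)" by (rule path_ne[OF nr]) (auto simp: EE_def ES_def)
  have c17: "\<not> (c 0 = c 5 \<and> c 6 = c 4)" by (rule path_ne[OF nr]) (auto simp: EE_def ES_def)
  have c18: "\<not> (c 1 = c 6 \<and> c 0 = c 5)" by (rule path_ne[OF nr]) (auto simp: EE_def ES_def)
  note cons = c0 c1 c2 c3 c4 c5 c6 c7 c8 c9 c10 c11 c12 c13 c14 c15 c16 c17 c18
  show False
  proof (cases "c 1 = c 0")
    case True note h1 = True
    show False using h1 cons by simp
  next
    case False note h2 = False
    show False
    proof (cases "c 2 = c 0")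
      case True note h3 = True
      show False using h2 h3 cons by simp
    next
      case False note h4 = False
      show False
      proof (cases "c 2 = c 1")
        case True note h5 = True
        show False using h2 h4 h5 cons by simp
      next
        case False note h6 = False
        show False
        proof (cases "c 3 = c 0")
          case True note h7 = True
          show False
          proof (cases "c 4 = c 0")
            case True note h8 = True
            show False using h2 h4 h6 h7 h8 cons by simp
          next
            case False note h9 = False
            show False
            proof (cases "c 4 = c 1")
              case True note h10 = True
              show False
              proof (cases "c 5 = c 0")
                case True note h11 = True
                show False using h2 h4 h6 h7 h9 h10 h11 cons by simp
              next
                case False note h12 = False
                show False
                proof (cases "c 5 = c 1")
                  case True note h13 = True
                  show False using h2 h4 h6 h7 h9 h10 h12 h13 cons by simp
                next
                  case False note h14 = False
                  show False
                  proof (cases "c 5 = c 2")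
                    case True note h15 = True
                    show False using h2 h4 h6 h7 h9 h10 h12 h14 h15 cons by simp
                  next
                    case False note h16 = False
                    show False
                    proof (cases "c 6 = c 0")
                      case True note h17 = True
                      show False using h2 h4 h6 h7 h9 h10 h12 h14 h16 h17 cons by simp
                    next
                      case False note h18 = False
                      show False
                      proof (cases "c 6 = c 1")
                        case True note h19 = True
                        show False using h2 h4 h6 h7 h9 h10 h12 h14 h16 h18 h19 cons by simp
                      next
                        case False note h20 = False
                        show False
                        proof (cases "c 6 = c 2")
                          case True note h21 = True
                          show False using h2 h4 h6 h7 h9 h10 h12 h14 h16 h18 h20 h21 cons by simp
                        next
                          case False note h22 = False
                          show False
                          proof (cases "c 6 = c 5")
                            case True note h23 = True
                            show False using h2 h4 h6 h7 h9 h10 h12 h14 h16 h18 h20 h22 h23 cons by simp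
                          next
                            case False note h24 = False
                            have A: "card {c 0, c 1, c 2, c 5, c 6} = 5" using h2 h4 h6 h7 h9 h10 h12 h14 h16 h18 h20 h22 h24 by simp
                            have B: "{c 0, c 1, c 2, c 5, c 6} \<subseteq> c ` VV" by (auto simp: VV_def)
                            show False using card_mono[OF fin B] A lt by simp
                          qed
                        qed
                      qed
                    qed
                  qed
                qed
              qed
            next
              case False note h25 = False
              show False
              proof (cases "c 4 = c 2")
                case True note h26 = True
                show False using h2 h4 h6 h7 h9 h25 h26 cons by simp
              next
                case False note h27 = False
                show False
                proof (cases "c 5 = c 0")
                  case True note h28 = True
                  show False using h2 h4 h6 h7 h9 h25 h27 h28 cons by simp
                next
                  case False note h29 = False
                  show False
                  proof (cases "c 5 = c 1")
                    case True note h30 = True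
                    show False
                    proof (cases "c 6 = c 0")
                      case True note h31 = True
                      show False using h2 h4 h6 h7 h9 h25 h27 h29 h30 h31 cons by simp
                    next
                      case False note h32 = False
                      show False
                      proof (cases "c 6 = c 1")
                        case True note h33 = True
                        show False using h2 h4 h6 h7 h9 h25 h27 h29 h30 h32 h33 cons by simp
                      next
                        case False note h34 = False
                        show False
                        proof (cases "c 6 = c 2")
                          case True note h35 = True
                          show False using h2 h4 h6 h7 h9 h25 h27 h29 h30 h32 h34 h35 cons by simp
                        next
                          case False note h36 = False
                          show False
                          proof (cases "c 6 = c 4")
                            case True note h37 = True
                            show False using h2 h4 h6 h7 h9 h25 h27 h29 h30 h32 h34 h36 h37 cons by simp
                          next
                            case False note h38 = False
                            have A: "card {c 0, c 1, c 2, c 4, c 6} = 5" using h2 h4 h6 h7 h9 h25 h27 h29 h30 h32 h34 h36 h38 by simp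
                            have B: "{c 0, c 1, c 2, c 4, c 6} \<subseteq> c ` VV" by (auto simp: VV_def)
                            show False using card_mono[OF fin B] A lt by simp
                          qed
                        qed
                      qed
                    qed
                  next
                    case False note h39 = False
                    show False
                    proof (cases "c 5 = c 2")
                      case True note h40 = True
                      show False using h2 h4 h6 h7 h9 h25 h27 h29 h39 h40 cons by simp
                    next
                      case False note h41 = False
                      show False
                      proof (cases "c 5 = c 4")
                        case True note h42 = True
                        show False using h2 h4 h6 h7 h9 h25 h27 h29 h39 h41 h42 cons by simp
                      next
                        case False note h43 = False
                        have A: "card {c 0, c 1, c 2, c 4, c 5} = 5" using h2 h4 h6 h7 h9 h25 h27 h29 h39 h41 h43 by simp
                        have B: "{c 0, c 1, c 2, c 4, c 5} \<subseteq> c ` VV" by (auto simp: VV_def)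
                        show False using card_mono[OF fin B] A lt by simp
                      qed
                    qed
                  qed
                qed
              qed
            qed
          qed
        next
          case False note h44 = False
          show False
          proof (cases "c 3 = c 1")
            case True note h45 = True
            show False
            proof (cases "c 4 = c 0")
              case True note h46 = True
              show False
              proof (cases "c 5 = c 0")
                case True note h47 = True
                show False using h2 h4 h6 h44 h45 h46 h47 cons by simp
              next
                case False note h48 = False
                show False
                proof (cases "c 5 = c 1")
                  case True note h49 = True
                  show False using h2 h4 h6 h44 h45 h46 h48 h49 cons by simp
                next
                  case False note h50 = False
                  show False
                  proof (cases "c 5 = c 2")
                    case True note h51 = True
                    show False using h2 h4 h6 h44 h45 h46 h48 h50 h51 cons by simp
                  next
                    case False note h52 = False
                    show False
                    proof (cases "c 6 = c 0")
                      case True note h53 = True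
                      show False using h2 h4 h6 h44 h45 h46 h48 h50 h52 h53 cons by simp
                    next
                      case False note h54 = False
                      show False
                      proof (cases "c 6 = c 1")
                        case True note h55 = True
                        show False using h2 h4 h6 h44 h45 h46 h48 h50 h52 h54 h55 cons by simp
                      next
                        case False note h56 = False
                        show False
                        proof (cases "c 6 = c 2")
                          case True note h57 = True
                          show False using h2 h4 h6 h44 h45 h46 h48 h50 h52 h54 h56 h57 cons by simp
                        next
                          case False note h58 = False
                          show False
                          proof (cases "c 6 = c 5")
                            case True note h59 = True
                            show False using h2 h4 h6 h44 h45 h46 h48 h50 h52 h54 h56 h58 h59 cons by simp
                          next
                            case False note h60 = False
                            have A: "card {c 0, c 1, c 2, c 5, c 6} = 5" using h2 h4 h6 h44 h45 h46 h48 h50 h52 h54 h56 h58 h60 by simp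
                            have B: "{c 0, c 1, c 2, c 5, c 6} \<subseteq> c ` VV" by (auto simp: VV_def)
                            show False using card_mono[OF fin B] A lt by simp
                          qed
                        qed
                      qed
                    qed
                  qed
                qed
              qed
            next
              case False note h61 = False
              show False
              proof (cases "c 4 = c 1")
                case True note h62 = True
                show False using h2 h4 h6 h44 h45 h61 h62 cons by simp
              next
                case False note h63 = False
                show False
                proof (cases "c 4 = c 2")
                  case True note h64 = True
                  show False using h2 h4 h6 h44 h45 h61 h63 h64 cons by simp
                next
                  case False note h65 = False
                  show False
                  proof (cases "c 5 = c 0")
                    case True note h66 = True
                    show False
                    proof (cases "c 6 = c 0")
                      case True note h67 = True
                      show False using h2 h4 h6 h44 h45 h61 h63 h65 h66 h67 cons by simp
                    next
                      case False note h68 = False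
                      show False
                      proof (cases "c 6 = c 1")
                        case True note h69 = True
                        show False using h2 h4 h6 h44 h45 h61 h63 h65 h66 h68 h69 cons by simp
                      next
                        case False note h70 = False
                        show False
                        proof (cases "c 6 = c 2")
                          case True note h71 = True
                          show False using h2 h4 h6 h44 h45 h61 h63 h65 h66 h68 h70 h71 cons by simp
                        next
                          case False note h72 = False
                          show False
                          proof (cases "c 6 = c 4")
                            case True note h73 = True
                            show False using h2 h4 h6 h44 h45 h61 h63 h65 h66 h68 h70 h72 h73 cons by simp
                          next
                            case False note h74 = False
                            have A: "card {c 0, c 1, c 2, c 4, c 6} = 5" using h2 h4 h6 h44 h45 h61 h63 h65 h66 h68 h70 h72 h74 by simp
                            have B: "{c 0, c 1, c 2, c 4, c 6} \<subseteq> c ` VV" by (auto simp: VV_def)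
                            show False using card_mono[OF fin B] A lt by simp
                          qed
                        qed
                      qed
                    qed
                  next
                    case False note h75 = False
                    show False
                    proof (cases "c 5 = c 1")
                      case True note h76 = True
                      show False using h2 h4 h6 h44 h45 h61 h63 h65 h75 h76 cons by simp
                    next
                      case False note h77 = False
                      show False
                      proof (cases "c 5 = c 2")
                        case True note h78 = True
                        show False using h2 h4 h6 h44 h45 h61 h63 h65 h75 h77 h78 cons by simp
                      next
                        case False note h79 = False
                        show False
                        proof (cases "c 5 = c 4")
                          case True note h80 = True
                          show False using h2 h4 h6 h44 h45 h61 h63 h65 h75 h77 h79 h80 cons by simp
                        next
                          case False note h81 = False
                          have A: "card {c 0, c 1, c 2, c 4, c 5} = 5" using h2 h4 h6 h44 h45 h61 h63 h65 h75 h77 h79 h81 by simp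
                          have B: "{c 0, c 1, c 2, c 4, c 5} \<subseteq> c ` VV" by (auto simp: VV_def)
                          show False using card_mono[OF fin B] A lt by simp
                        qed
                      qed
                    qed
                  qed
                qed
              qed
            qed
          next
            case False note h82 = False
            show False
            proof (cases "c 3 = c 2")
              case True note h83 = True
              show False using h2 h4 h6 h44 h82 h83 cons by simp
            next
              case False note h84 = False
              show False
              proof (cases "c 4 = c 0")
                case True note h85 = True
                show False
                proof (cases "c 5 = c 0")
                  case True note h86 = True
                  show False using h2 h4 h6 h44 h82 h84 h85 h86 cons by simp
                next
                  case False note h87 = False
                  show False
                  proof (cases "c 5 = c 1")
                    case True note h88 = True
                    show False
                    proof (cases "c 6 = c 0")
                      case True note h89 = True
                      show False using h2 h4 h6 h44 h82 h84 h85 h87 h88 h89 cons by simp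
                    next
                      case False note h90 = False
                      show False
                      proof (cases "c 6 = c 1")
                        case True note h91 = True
                        show False using h2 h4 h6 h44 h82 h84 h85 h87 h88 h90 h91 cons by simp
                      next
                        case False note h92 = False
                        show False
                        proof (cases "c 6 = c 2")
                          case True note h93 = True
                          show False using h2 h4 h6 h44 h82 h84 h85 h87 h88 h90 h92 h93 cons by simp
                        next
                          case False note h94 = False
                          show False
                          proof (cases "c 6 = c 3")
                            case True note h95 = True
                            show False using h2 h4 h6 h44 h82 h84 h85 h87 h88 h90 h92 h94 h95 cons by simp
                          next
                            case False note h96 = False
                            have A: "card {c 0, c 1, c 2, c 3, c 6} = 5" using h2 h4 h6 h44 h82 h84 h85 h87 h88 h90 h92 h94 h96 by simp
                            have B: "{c 0, c 1, c 2, c 3, c 6} \<subseteq> c ` VV" by (auto simp: VV_def)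
                            show False using card_mono[OF fin B] A lt by simp
                          qed
                        qed
                      qed
                    qed
                  next
                    case False note h97 = False
                    show False
                    proof (cases "c 5 = c 2")
                      case True note h98 = True
                      show False
                      proof (cases "c 6 = c 0")
                        case True note h99 = True
                        show False using h2 h4 h6 h44 h82 h84 h85 h87 h97 h98 h99 cons by simp
                      next
                        case False note h100 = False
                        show False
                        proof (cases "c 6 = c 1")
                          case True note h101 = True
                          show False using h2 h4 h6 h44 h82 h84 h85 h87 h97 h98 h100 h101 cons by simp
                        next
                          case False note h102 = False
                          show False
                          proof (cases "c 6 = c 2")
                            case True note h103 = True
                            show False using h2 h4 h6 h44 h82 h84 h85 h87 h97 h98 h100 h102 h103 cons by simp
                          next
                            case False note h104 = False
                            show False
                            proof (cases "c 6 = c 3")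
                              case True note h105 = True
                              show False using h2 h4 h6 h44 h82 h84 h85 h87 h97 h98 h100 h102 h104 h105 cons by simp
                            next
                              case False note h106 = False
                              have A: "card {c 0, c 1, c 2, c 3, c 6} = 5" using h2 h4 h6 h44 h82 h84 h85 h87 h97 h98 h100 h102 h104 h106 by simp
                              have B: "{c 0, c 1, c 2, c 3, c 6} \<subseteq> c ` VV" by (auto simp: VV_def)
                              show False using card_mono[OF fin B] A lt by simp
                            qed
                          qed
                        qed
                      qed
                    next
                      case False note h107 = False
                      show False
                      proof (cases "c 5 = c 3")
                        case True note h108 = True
                        show False using h2 h4 h6 h44 h82 h84 h85 h87 h97 h107 h108 cons by simp
                      next
                        case False note h109 = False
                        have A: "card {c 0, c 1, c 2, c 3, c 5} = 5" using h2 h4 h6 h44 h82 h84 h85 h87 h97 h107 h109 by simp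
                        have B: "{c 0, c 1, c 2, c 3, c 5} \<subseteq> c ` VV" by (auto simp: VV_def)
                        show False using card_mono[OF fin B] A lt by simp
                      qed
                    qed
                  qed
                qed
              next
                case False note h110 = False
                show False
                proof (cases "c 4 = c 1")
                  case True note h111 = True
                  show False
                  proof (cases "c 5 = c 0")
                    case True note h112 = True
                    show False
                    proof (cases "c 6 = c 0")
                      case True note h113 = True
                      show False using h2 h4 h6 h44 h82 h84 h110 h111 h112 h113 cons by simp
                    next
                      case False note h114 = False
                      show False
                      proof (cases "c 6 = c 1")
                        case True note h115 = True
                        show False using h2 h4 h6 h44 h82 h84 h110 h111 h112 h114 h115 cons by simp
                      next
                        case False note h116 = False
                        show False
                        proof (cases "c 6 = c 2")
                          case True note h117 = True
                          show False using h2 h4 h6 h44 h82 h84 h110 h111 h112 h114 h116 h117 cons by simp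
                        next
                          case False note h118 = False
                          show False
                          proof (cases "c 6 = c 3")
                            case True note h119 = True
                            show False using h2 h4 h6 h44 h82 h84 h110 h111 h112 h114 h116 h118 h119 cons by simp
                          next
                            case False note h120 = False
                            have A: "card {c 0, c 1, c 2, c 3, c 6} = 5" using h2 h4 h6 h44 h82 h84 h110 h111 h112 h114 h116 h118 h120 by simp
                            have B: "{c 0, c 1, c 2, c 3, c 6} \<subseteq> c ` VV" by (auto simp: VV_def)
                            show False using card_mono[OF fin B] A lt by simp
                          qed
                        qed
                      qed
                    qed
                  next
                    case False note h121 = False
                    show False
                    proof (cases "c 5 = c 1")
                      case True note h122 = True
                      show False using h2 h4 h6 h44 h82 h84 h110 h111 h121 h122 cons by simp
                    next
                      case False note h123 = False
                      show False
                      proof (cases "c 5 = c 2")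
                        case True note h124 = True
                        show False
                        proof (cases "c 6 = c 0")
                          case True note h125 = True
                          show False using h2 h4 h6 h44 h82 h84 h110 h111 h121 h123 h124 h125 cons by simp
                        next
                          case False note h126 = False
                          show False
                          proof (cases "c 6 = c 1")
                            case True note h127 = True
                            show False using h2 h4 h6 h44 h82 h84 h110 h111 h121 h123 h124 h126 h127 cons by simp
                          next
                            case False note h128 = False
                            show False
                            proof (cases "c 6 = c 2")
                              case True note h129 = True
                              show False using h2 h4 h6 h44 h82 h84 h110 h111 h121 h123 h124 h126 h128 h129 cons by simp
                            next
                              case False note h130 = False
                              show False
                              proof (cases "c 6 = c 3")
                                case True note h131 = True
                                show False using h2 h4 h6 h44 h82 h84 h110 h111 h121 h123 h124 h126 h128 h130 h131 cons by simp
                              next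
                                case False note h132 = False
                                have A: "card {c 0, c 1, c 2, c 3, c 6} = 5" using h2 h4 h6 h44 h82 h84 h110 h111 h121 h123 h124 h126 h128 h130 h132 by simp
                                have B: "{c 0, c 1, c 2, c 3, c 6} \<subseteq> c ` VV" by (auto simp: VV_def)
                                show False using card_mono[OF fin B] A lt by simp
                              qed
                            qed
                          qed
                        qed
                      next
                        case False note h133 = False
                        show False
                        proof (cases "c 5 = c 3")
                          case True note h134 = True
                          show False using h2 h4 h6 h44 h82 h84 h110 h111 h121 h123 h133 h134 cons by simp
                        next
                          case False note h135 = False
                          have A: "card {c 0, c 1, c 2, c 3, c 5} = 5" using h2 h4 h6 h44 h82 h84 h110 h111 h121 h123 h133 h135 by simp
                          have B: "{c 0, c 1, c 2, c 3, c 5} \<subseteq> c ` VV" by (auto simp: VV_def)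
                          show False using card_mono[OF fin B] A lt by simp
                        qed
                      qed
                    qed
                  qed
                next
                  case False note h136 = False
                  show False
                  proof (cases "c 4 = c 2")
                    case True note h137 = True
                    show False
                    proof (cases "c 5 = c 0")
                      case True note h138 = True
                      show False
                      proof (cases "c 6 = c 0")
                        case True note h139 = True
                        show False using h2 h4 h6 h44 h82 h84 h110 h136 h137 h138 h139 cons by simp
                      next
                        case False note h140 = False
                        show False
                        proof (cases "c 6 = c 1")
                          case True note h141 = True
                          show False using h2 h4 h6 h44 h82 h84 h110 h136 h137 h138 h140 h141 cons by simp
                        next
                          case False note h142 = False
                          show False
                          proof (cases "c 6 = c 2")
                            case True note h143 = True
                            show False using h2 h4 h6 h44 h82 h84 h110 h136 h137 h138 h140 h142 h143 cons by simp
                          next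
                            case False note h144 = False
                            show False
                            proof (cases "c 6 = c 3")
                              case True note h145 = True
                              show False using h2 h4 h6 h44 h82 h84 h110 h136 h137 h138 h140 h142 h144 h145 cons by simp
                            next
                              case False note h146 = False
                              have A: "card {c 0, c 1, c 2, c 3, c 6} = 5" using h2 h4 h6 h44 h82 h84 h110 h136 h137 h138 h140 h142 h144 h146 by simp
                              have B: "{c 0, c 1, c 2, c 3, c 6} \<subseteq> c ` VV" by (auto simp: VV_def)
                              show False using card_mono[OF fin B] A lt by simp
                            qed
                          qed
                        qed
                      qed
                    next
                      case False note h147 = False
                      show False
                      proof (cases "c 5 = c 1")
                        case True note h148 = True
                        show False
                        proof (cases "c 6 = c 0")
                          case True note h149 = True
                          show False using h2 h4 h6 h44 h82 h84 h110 h136 h137 h147 h148 h149 cons by simp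
                        next
                          case False note h150 = False
                          show False
                          proof (cases "c 6 = c 1")
                            case True note h151 = True
                            show False using h2 h4 h6 h44 h82 h84 h110 h136 h137 h147 h148 h150 h151 cons by simp
                          next
                            case False note h152 = False
                            show False
                            proof (cases "c 6 = c 2")
                              case True note h153 = True
                              show False using h2 h4 h6 h44 h82 h84 h110 h136 h137 h147 h148 h150 h152 h153 cons by simp
                            next
                              case False note h154 = False
                              show False
                              proof (cases "c 6 = c 3")
                                case True note h155 = True
                                show False using h2 h4 h6 h44 h82 h84 h110 h136 h137 h147 h148 h150 h152 h154 h155 cons by simp
                              next
                                case False note h156 = False
                                have A: "card {c 0, c 1, c 2, c 3, c 6} = 5" using h2 h4 h6 h44 h82 h84 h110 h136 h137 h147 h148 h150 h152 h154 h156 by simp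
                                have B: "{c 0, c 1, c 2, c 3, c 6} \<subseteq> c ` VV" by (auto simp: VV_def)
                                show False using card_mono[OF fin B] A lt by simp
                              qed
                            qed
                          qed
                        qed
                      next
                        case False note h157 = False
                        show False
                        proof (cases "c 5 = c 2")
                          case True note h158 = True
                          show False using h2 h4 h6 h44 h82 h84 h110 h136 h137 h147 h157 h158 cons by simp
                        next
                          case False note h159 = False
                          show False
                          proof (cases "c 5 = c 3")
                            case True note h160 = True
                            show False using h2 h4 h6 h44 h82 h84 h110 h136 h137 h147 h157 h159 h160 cons by simp
                          next
                            case False note h161 = False
                            have A: "card {c 0, c 1, c 2, c 3, c 5} = 5" using h2 h4 h6 h44 h82 h84 h110 h136 h137 h147 h157 h159 h161 by simp
                            have B: "{c 0, c 1, c 2, c 3, c 5} \<subseteq> c ` VV" by (auto simp: VV_def)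
                            show False using card_mono[OF fin B] A lt by simp
                          qed
                        qed
                      qed
                    qed
                  next
                    case False note h162 = False
                    show False
                    proof (cases "c 4 = c 3")
                      case True note h163 = True
                      show False using h2 h4 h6 h44 h82 h84 h110 h136 h162 h163 cons by simp
                    next
                      case False note h164 = False
                      have A: "card {c 0, c 1, c 2, c 3, c 4} = 5" using h2 h4 h6 h44 h82 h84 h110 h136 h162 h164 by simp
                      have B: "{c 0, c 1, c 2, c 3, c 4} \<subseteq> c ` VV" by (auto simp: VV_def)
                      show False using card_mono[OF fin B] A lt by simp
                    qed
                  qed
                qed
              qed
            qed
          qed
        qed
      qed
    qed
  qed
qed


theorem theorem2:
  shows "\<exists>(V :: nat set) E. finite V \<and> simple_graph V E \<and> outerplanar V E \<and>
           (\<forall>c :: nat \<Rightarrow> nat. nonrep_colouring V E c \<longrightarrow> card (c ` V) \<ge> 5)"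
proof (intro exI conjI allI impI)
  show "finite VV" by (simp add: VV_def)
  show "simple_graph VV EE" by (rule simple)
  show "outerplanar VV EE" by (rule outerplanar_G)
  fix c :: "nat \<Rightarrow> nat" assume "nonrep_colouring VV EE c"
  thus "card (c ` VV) \<ge> 5" using comb by (meson not_le)
qed

end
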